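(* Let $n\ge 1$. The map $\phi$ described below is a well-defined bijection from $\mathcal{I}_n(\underline{000})$ onto the disjoint union $\overline{\mathcal{D}}_n\sqcup\overline{\mathcal{D}}_{n-1}$. In particular, $|\mathcal{I}_n(\underline{000})|=\overline{d}_n+\overline{d}_{n-1}=(n!-d_n)+((n-1)!-d_{n-1})$. Definition of $\phi$. Let $e=e_1e_2\dots e_n\in\mathcal{I}_n(\underline{000})$. First define a word $w=w_2\dots w_n$ by, for $2\le k\le n$: $w_k=R$ if $e_k=e_{k-1}$; $w_k=e_k$ if $e_k>e_{k-1}$; $w_k=e_k+1$ if $e_k<e_{k-1}$. (Here $R$ is a new symbol; use the convention that $w_1\neq R$.) Next define permutations $\sigma_1,\dots,\sigma_n$: set $\sigma_1=1\in\overline{\mathcal{D}}_1$. For $k=2,\dots,n$: if $w_k=R$, set $\sigma_k=\sigma_{k-1}$ (regarded as an element of $\overline{\mathcal{D}}_{k-1}$). If $w_k\neq R$, then $$\sigma_k=\begin{cases}(w_k,k)\,\sigma_{k-1} & \text{if } w_{k-1}\neq R \text{ and } \sigma_{k-1}\in\overline{\mathcal{D}}_{k-1}\text{ has a fixed point different from } w_k,\\ (w_k,k-1)\,\sigma_{k-1} & \text{otherwise,}\end{cases}$$ where on the right-hand side $\sigma_{k-1}$ is viewed as an element of $\mathfrak{S}_k$ (by adding fixed points), and $\sigma_k$ is regarded as an element of $\overline{\mathcal{D}}_k$. Finally $\phi(e)=\sigma_n$, regarded as an element of $\overline{\mathcal{D}}_n$ if $w_n\neq R$ and of $\overline{\mathcal{D}}_{n-1}$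 if $w_n=R$.
   Context: $\mathfrak{S}_n$ is the set of permutations of $[n]=\{1,\dots,n\}$; $\mathfrak{S}_{m}$ is viewed as the subset of $\mathfrak{S}_n$ ($m\le n$) of permutations fixing $m+1,\dots,n$. A fixed point of $\pi$ is $i$ with $\pi(i)=i$. A derangement is a permutation with no fixed points; $d_n$ is the number of derangements in $\mathfrak{S}_n$ (with $d_0=1$). $\overline{\mathcal{D}}_n$ is the set of permutations in $\mathfrak{S}_n$ having at least one fixed point, and $\overline{d}_n=|\overline{\mathcal{D}}_n|=n!-d_n$ (so $\overline{\mathcal{D}}_0=\emptyset$). An inversion sequence of length $n$ is an integer sequence $e_1\dots e_n$ with $0\le e_i<i$ for all $i$; $\mathcal{I}_n(\underline{000})$ is the set of those with no $i\in[n-2]$ such that $e_i=e_{i+1}=e_{i+2}$. For $1\le a,b\le n$, $(a,b)$ denotes the permutation of $[n]$ exchanging $a$ and $b$ (the identity if $a=b$), and $(a,b)\sigma$ is the composition, i.e. the one-line notation of $\sigma$ with the values $a$ and $b$ swapped. *)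

theory Defs
  imports "HOL-Combinatorics.Combinatorics"
begin

(* Inversion sequences e_1..e_n are lists of length n; e_k = e ! (k-1), and 0 <= e_k < k. *)
definition inv_seq_000 :: "nat \<Rightarrow> nat list set" where
  "inv_seq_000 n = {e. length e = n \<and> (\<forall>i<n. e ! i \<le> i)
      \<and> (\<forall>i. i + 2 < n \<longrightarrow> \<not> (e ! i = e ! (i+1) \<and> e ! (i+1) = e ! (i+2)))}"

definition Dbar :: "nat \<Rightarrow> (nat \<Rightarrow> nat) set" where
  "Dbar n = {\<sigma>. \<sigma> permutes {1..n} \<and> (\<exists>i\<in>{1..n}. \<sigma> i = i)}"

definition derangements :: "nat \<Rightarrow> (nat \<Rightarrow> nat) set" where
  "derangements n = {\<sigma>. \<sigma> permutes {1..n} \<and> (\<forall>i\<in>{1..n}. \<sigma> i \<noteq> i)}"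

definition dn :: "nat \<Rightarrow> nat" where
  "dn n = card (derangements n)"

(* the letter w_k: None stands for the symbol R; w_1 is a (non-R) dummy value *)
definition wl :: "nat list \<Rightarrow> nat \<Rightarrow> nat option" where
  "wl e k = (if k \<le> 1 then Some 0 else
     (let a = e ! (k-1); b = e ! (k-2) in
      if a = b then None else if a > b then Some a else Some (a+1)))"

(* sig e k = sigma_k, a function on nat fixing everything outside [k];
   (a,b) sigma = transpose a b o sigma (swap the values a and b) *)
primrec sig :: "nat list \<Rightarrow> nat \<Rightarrow> (nat \<Rightarrow> nat)" where
  "sig e 0 = id"
| "sig e (Suc k) = (if k = 0 then id else
     (let s = sig e k in
      case wl e (Suc k) of
        None \<Rightarrow> s
      | Some a \<Rightarrow> (if wl e k \<noteq> None \<and> (\<exists>i\<in>{1..k}. s i = i \<and> i \<noteq> a)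
                   then transpose a (Suc k) \<circ> s
                   else transpose a k \<circ> s)))"

(* phi: Inl sigma means sigma in Dbar n, Inr sigma means sigma in Dbar (n-1) *)
definition phi :: "nat \<Rightarrow> nat list \<Rightarrow> (nat \<Rightarrow> nat) + (nat \<Rightarrow> nat)" where
  "phi n e = (if wl e n = None then Inr (sig e n) else Inl (sig e n))"

end

theory Submission
  imports Defs
begin


definition Fm :: "nat \<Rightarrow> ((nat \<Rightarrow> nat) + (nat \<Rightarrow> nat)) \<times> nat \<Rightarrow> (nat \<Rightarrow> nat)" where
  "Fm n p = (case p of (Inl s, a) \<Rightarrow> (if \<exists>i\<in>{1..n}. s i = i \<and> i \<noteq> a
              then transpose a (Suc n) \<circ> s else transpose a n \<circ> s)
            | (Inr s, a) \<Rightarrow> transpose a n \<circ> s)"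

definition Gm :: "nat \<Rightarrow> (nat \<Rightarrow> nat) \<Rightarrow> ((nat \<Rightarrow> nat) + (nat \<Rightarrow> nat)) \<times> nat" where
  "Gm n \<sigma> = (if \<sigma> (Suc n) \<noteq> Suc n then (Inl (transpose (\<sigma> (Suc n)) (Suc n) \<circ> \<sigma>), \<sigma> (Suc n))
     else if (\<exists>i\<in>{1..n-1}. \<sigma> i = i) \<or> (\<sigma> (\<sigma> n) = n \<and> \<sigma> n \<noteq> n)
     then (Inr (transpose (\<sigma> n) n \<circ> \<sigma>), \<sigma> n)
     else (Inl (transpose (inv \<sigma> n) n \<circ> \<sigma>), inv \<sigma> n))"

lemma tt: "transpose a b \<circ> (transpose a b \<circ> s) = s"
  by (simp add: comp_assoc[symmetric])

lemma Fm_in: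
  assumes n: "n \<ge> 1" and x: "x \<in> (Inl ` Dbar n \<union> Inr ` Dbar (n-1)) \<times> {1..n}"
  shows "Fm n x \<in> Dbar (Suc n)" and "Gm n (Fm n x) = x"
proof -
  obtain y w where xe: "x = (y, w)" and w: "w \<in> {1..n}" and y: "y \<in> Inl ` Dbar n \<union> Inr ` Dbar (n-1)"
    using x by auto
  have sub1: "{1..n} \<subseteq> {1..Suc n}" and sub2: "{1..n-1} \<subseteq> {1..Suc n}" by auto
  have "Fm n x \<in> Dbar (Suc n) \<and> Gm n (Fm n x) = x"
  proof (cases y)
    case (Inl s)
    then have s: "s \<in> Dbar n" using y by auto
    then have sp: "s permutes {1..n}" and sf: "\<exists>i\<in>{1..n}. s i = i" by (auto simp: Dbar_def)
    have spS: "s permutes {1..Suc n}" using permutes_subset[OF sp sub1] .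
    have sk: "s (Suc n) = Suc n" using permutes_not_in[OF sp] by auto
    show ?thesis
    proof (cases "\<exists>i\<in>{1..n}. s i = i \<and> i \<noteq> w")
      case True
      then obtain i where i: "i \<in> {1..n}" "s i = i" "i \<noteq> w" by auto
      have F: "Fm n x = transpose w (Suc n) \<circ> s" using True by (simp add: Fm_def xe Inl)
      have p: "transpose w (Suc n) \<circ> s permutes {1..Suc n}"
        by (rule permutes_compose[OF spS permutes_swap_id]) (use w in auto)
      have "(transpose w (Suc n) \<circ> s) i = i" using i by auto
      hence D: "Fm n x \<in> Dbar (Suc n)" using p i F unfolding Dbar_def by force
      have "(transpose w (Suc n) \<circ> s) (Suc n) = w" using sk by simp
      hence "Gm n (transpose w (Suc n) \<circ> s) = (Inl s, w)" using w by (simp add: Gm_def tt)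
      hence "Gm n (Fm n x) = x" using F by (simp add: xe Inl)
      with D show ?thesis by simp
    next
      case False
      have F: "Fm n x = transpose w n \<circ> s" using False by (auto simp add: Fm_def xe Inl)
      have p: "transpose w n \<circ> s permutes {1..Suc n}"
        by (rule permutes_compose[OF spS permutes_swap_id]) (use w n in auto)
      have fk: "(transpose w n \<circ> s) (Suc n) = Suc n" using sk w by auto
      hence D: "Fm n x \<in> Dbar (Suc n)" using p F unfolding Dbar_def by force
      have sw: "s w = w" using False sf by auto
      have nf: "\<And>i. i \<in> {1..n} \<Longrightarrow> i \<noteq> w \<Longrightarrow> s i \<noteq> i" using False by auto
      have si: "inj s" using permutes_inj[OF sp] .
      let ?t = "transpose w n \<circ> s"
      have C: "\<not> ((\<exists>i\<in>{1..n-1}. ?t i = i) \<or> (?t (?t n) = n \<and> ?t n \<noteq> n))"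
      proof
        assume "(\<exists>i\<in>{1..n-1}. ?t i = i) \<or> (?t (?t n) = n \<and> ?t n \<noteq> n)"
        then show False
        proof
          assume "\<exists>i\<in>{1..n-1}. ?t i = i"
          then obtain i where i: "i \<in> {1..n-1}" "?t i = i" by auto
          show False
          proof (cases "i = w")
            case True
            then show ?thesis using i sw by auto
          next
            case False
            then have "s i = transpose w n i" using i(2) by (metis comp_apply transpose_involutory)
            then have "s i = i" using i False by auto
            then show ?thesis using nf[of i] i False by force
          qed
        next
          assume a: "?t (?t n) = n \<and> ?t n \<noteq> n"
          show False
          proof (cases "w = n")
            case True
            then show ?thesis using a sw by auto
          next
            case False
            have "s n \<noteq> n" using nf[of n] False n by auto
            moreover have "s n \<noteq> w" using sw si False by (metis injD)
            ultimately have tn: "?t n = s n" by simp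
            let ?c = "s n"
            have "transpose w n (s ?c) = n" using a tn by simp
            hence "s ?c = w" by (metis transpose_apply_first transpose_involutory)
            hence "?c = w" using sw si by (metis injD)
            thus False using \<open>s n \<noteq> w\<close> by simp
          qed
        qed
      qed
      have tw: "?t w = n" using sw by simp
      have ps: "?t permutes {1..Suc n}" using p .
      have "inv ?t n = w" using permutes_inverses(2)[OF ps, of w] tw by simp
      hence "Gm n ?t = (Inl s, w)" using C fk by (simp add: Gm_def tt)
      hence "Gm n (Fm n x) = x" using F by (simp add: xe Inl)
      with D show ?thesis by simp
    qed
  next
    case (Inr s)
    then have s: "s \<in> Dbar (n-1)" using y by auto
    then have sp: "s permutes {1..n-1}" and sf: "\<exists>i\<in>{1..n-1}. s i = i" by (auto simp: Dbar_def)
    obtain f where f: "f \<in> {1..n-1}" "s f = f" using sf by auto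
    have spS: "s permutes {1..Suc n}" using permutes_subset[OF sp sub2] .
    have sk: "s (Suc n) = Suc n" "s n = n" using permutes_not_in[OF sp, of n] permutes_not_in[OF sp, of "Suc n"] n by auto
    have F: "Fm n x = transpose w n \<circ> s" by (simp add: Fm_def xe Inr)
    have p: "transpose w n \<circ> s permutes {1..Suc n}"
      by (rule permutes_compose[OF spS permutes_swap_id]) (use w n in auto)
    let ?t = "transpose w n \<circ> s"
    have fk: "?t (Suc n) = Suc n" using sk w by auto
    hence D: "Fm n x \<in> Dbar (Suc n)" using p F unfolding Dbar_def by force
    have tn: "?t n = w" using sk by simp
    have C: "(\<exists>i\<in>{1..n-1}. ?t i = i) \<or> (?t (?t n) = n \<and> ?t n \<noteq> n)"
    proof (cases "f = w")
      case True
      then show ?thesis using tn f by auto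
    next
      case False
      then have "?t f = f" using f by auto
      then show ?thesis using f(1) by blast
    qed
    hence "Gm n ?t = (Inr s, w)" using fk tn by (simp add: Gm_def tt)
    hence "Gm n (Fm n x) = x" using F by (simp add: xe Inr)
    with D show ?thesis by simp
  qed
  thus "Fm n x \<in> Dbar (Suc n)" and "Gm n (Fm n x) = x" by auto
qed

lemma Gm_in:
  assumes n: "n \<ge> 1" and sD: "\<sigma> \<in> Dbar (Suc n)"
  shows "Gm n \<sigma> \<in> (Inl ` Dbar n \<union> Inr ` Dbar (n-1)) \<times> {1..n}" and "Fm n (Gm n \<sigma>) = \<sigma>"
proof -
  have sp: "\<sigma> permutes {1..Suc n}" and sf: "\<exists>i\<in>{1..Suc n}. \<sigma> i = i" using sD by (auto simp: Dbar_def)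
  have si: "inj \<sigma>" using permutes_inj[OF sp] .
  have S: "{1..Suc n} - {1..n} = {Suc n}" by auto
  have S2: "{1..Suc n} - {1..n-1} = {n, Suc n}" using n by auto
  have "Gm n \<sigma> \<in> (Inl ` Dbar n \<union> Inr ` Dbar (n-1)) \<times> {1..n} \<and> Fm n (Gm n \<sigma>) = \<sigma>"
  proof (cases "\<sigma> (Suc n) = Suc n")
    case False
    let ?w = "\<sigma> (Suc n)"
    let ?t = "transpose ?w (Suc n) \<circ> \<sigma>"
    have G: "Gm n \<sigma> = (Inl ?t, ?w)" using False by (simp add: Gm_def)
    have wS: "?w \<in> {1..Suc n}" using permutes_in_image[OF sp] by auto
    hence w: "?w \<in> {1..n}" using False by auto
    have tp0: "?t permutes {1..Suc n}"
      by (rule permutes_compose[OF sp permutes_swap_id]) (use wS in auto)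
    have tp: "?t permutes {1..n}"
    proof (rule permutes_superset[OF tp0])
      fix x assume "x \<in> {1..Suc n} - {1..n}"
      then have "x = Suc n" by auto
      then show "?t x = x" by simp
    qed
    obtain i where i: "i \<in> {1..Suc n}" "\<sigma> i = i" using sf by auto
    have ik: "i \<noteq> Suc n" using i False by auto
    have iw: "i \<noteq> ?w" using i si False by (metis injD)
    have ti: "?t i = i" using i ik iw by simp
    have P: "\<exists>i\<in>{1..n}. ?t i = i \<and> i \<noteq> ?w" using i ik iw ti by (intro bexI[of _ i]) auto
    have "?t \<in> Dbar n" using tp P unfolding Dbar_def by auto
    hence M: "Gm n \<sigma> \<in> (Inl ` Dbar n \<union> Inr ` Dbar (n-1)) \<times> {1..n}" using G w by auto
    have "Fm n (Gm n \<sigma>) = \<sigma>" using P by (simp add: G Fm_def tt)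
    with M show ?thesis by simp
  next
    case True
    have snS: "\<sigma> n \<in> {1..Suc n}" using permutes_in_image[OF sp] n by auto
    have snk: "\<sigma> n \<noteq> Suc n" using True si by (metis injD n_not_Suc_n)
    show ?thesis
    proof (cases "(\<exists>i\<in>{1..n-1}. \<sigma> i = i) \<or> (\<sigma> (\<sigma> n) = n \<and> \<sigma> n \<noteq> n)")
      case C: True
      let ?a = "\<sigma> n"
      let ?t = "transpose ?a n \<circ> \<sigma>"
      have G: "Gm n \<sigma> = (Inr ?t, ?a)" using True C by (simp add: Gm_def)
      have a: "?a \<in> {1..n}" using snS snk by auto
      have tp0: "?t permutes {1..Suc n}"
        by (rule permutes_compose[OF sp permutes_swap_id]) (use snS n in auto)
      have tp: "?t permutes {1..n-1}"
      proof (rule permutes_superset[OF tp0])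
        fix x assume "x \<in> {1..Suc n} - {1..n-1}"
        then have "x = n \<or> x = Suc n" using n by auto
        then show "?t x = x" using True snk by auto
      qed
      have fp: "\<exists>i\<in>{1..n-1}. ?t i = i"
        using C
      proof
        assume "\<exists>i\<in>{1..n-1}. \<sigma> i = i"
        then obtain i where i: "i \<in> {1..n-1}" "\<sigma> i = i" by auto
        have "i \<noteq> ?a"
        proof
          assume "i = ?a"
          then have "\<sigma> i = \<sigma> n" using i by simp
          then have "i = n" using si by (metis injD)
          then show False using i n by auto
        qed
        then have "?t i = i" using i by auto
        then show ?thesis using i(1) by blast
      next
        assume c: "\<sigma> (\<sigma> n) = n \<and> \<sigma> n \<noteq> n"
        have "?t ?a = ?a" using c by simp
        moreover have "?a \<in> {1..n-1}" using a c by auto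
        ultimately show ?thesis by blast
      qed
      have "?t \<in> Dbar (n-1)" using tp fp unfolding Dbar_def by auto
      hence M: "Gm n \<sigma> \<in> (Inl ` Dbar n \<union> Inr ` Dbar (n-1)) \<times> {1..n}" using G a by auto
      have "Fm n (Gm n \<sigma>) = \<sigma>" by (simp add: G Fm_def tt)
      with M show ?thesis by simp
    next
      case C: False
      let ?b = "inv \<sigma> n"
      let ?t = "transpose ?b n \<circ> \<sigma>"
      have G: "Gm n \<sigma> = (Inl ?t, ?b)" using True C by (simp add: Gm_def)
      have sb: "\<sigma> ?b = n" using permutes_inverses(1)[OF sp] .
      have bS: "?b \<in> {1..Suc n}" using permutes_in_image[OF sp, of ?b] sb n by auto
      have bk: "?b \<noteq> Suc n" using sb True by auto
      have b: "?b \<in> {1..n}" using bS bk by auto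
      have tp0: "?t permutes {1..Suc n}"
        by (rule permutes_compose[OF sp permutes_swap_id]) (use bS n in auto)
      have tp: "?t permutes {1..n}"
      proof (rule permutes_superset[OF tp0])
        fix x assume "x \<in> {1..Suc n} - {1..n}"
        then have "x = Suc n" by auto
        then show "?t x = x" using True bk by auto
      qed
      have tb: "?t ?b = ?b" using sb by simp
      have "?t \<in> Dbar n" using tp tb b unfolding Dbar_def by auto
      hence M: "Gm n \<sigma> \<in> (Inl ` Dbar n \<union> Inr ` Dbar (n-1)) \<times> {1..n}" using G b by auto
      have nP: "\<not> (\<exists>i\<in>{1..n}. ?t i = i \<and> i \<noteq> ?b)"
      proof
        assume "\<exists>i\<in>{1..n}. ?t i = i \<and> i \<noteq> ?b"
        then obtain i where i: "i \<in> {1..n}" "?t i = i" "i \<noteq> ?b" by auto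
        have sin: "\<sigma> i \<noteq> n" using i(3) sb si by (metis injD)
        show False
        proof (cases "i = n")
          case True
          then have "transpose ?b n (\<sigma> n) = n" using i by simp
          then have "\<sigma> n = ?b" using True i(3) by (metis transpose_apply_first transpose_involutory)
          then show False using C sb i(3) True by auto
        next
          case False
          then have "transpose ?b n (\<sigma> i) = i" using i by simp
          then have "\<sigma> i = transpose ?b n i" by (metis transpose_involutory)
          then have "\<sigma> i = i" using i False by auto
          then show False using C i False by auto
        qed
      qed
      have "Fm n (Gm n \<sigma>) = \<sigma>" using nP by (auto simp add: G Fm_def tt)
      with M show ?thesis by simp
    qed
  qed
  thus "Gm n \<sigma> \<in> (Inl ` Dbar n \<union> Inr ` Dbar (n-1)) \<times> {1..n}" and "Fm n (Gm n \<sigma>) = \<sigma>" by auto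
qed

lemma Fm_bij:
  assumes n: "n \<ge> 1"
  shows "bij_betw (Fm n) ((Inl ` Dbar n \<union> Inr ` Dbar (n-1)) \<times> {1..n}) (Dbar (Suc n))"
  apply (rule bij_betw_byWitness[where f'="Gm n"])
  subgoal using Fm_in(2)[OF n] by blast
  subgoal using Gm_in(2)[OF n] by blast
  subgoal using Fm_in(1)[OF n] by blast
  subgoal using Gm_in(1)[OF n] by blast
  done



definition Aset :: "nat \<Rightarrow> nat list set" where
  "Aset k = {e \<in> inv_seq_000 k. wl e k \<noteq> None}"
definition Bset :: "nat \<Rightarrow> nat list set" where
  "Bset k = {e \<in> inv_seq_000 k. wl e k = None}"

lemma wl_app: assumes "j \<le> length e" shows "wl (e @ xs) j = wl e j"
proof (cases "j \<le> 1")
  case True then show ?thesis by (simp add: wl_def)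
next
  case False
  then have "j-1 < length e" "j-2 < length e" using assms by auto
  then show ?thesis by (simp add: wl_def nth_append Let_def)
qed

lemma sig_app: "k \<le> length e \<Longrightarrow> sig (e @ xs) k = sig e k"
proof (induction k)
  case 0 then show ?case by simp
next
  case (Suc k)
  then have "sig (e @ xs) k = sig e k" "wl (e @ xs) k = wl e k" "wl (e @ xs) (Suc k) = wl e (Suc k)"
    using wl_app by auto
  then show ?case by (simp only: sig.simps)
qed

lemma wl_last: "length e = n \<Longrightarrow> n \<ge> 1 \<Longrightarrow>
   wl (e @ [x]) (Suc n) = (if x = last e then None else if x > last e then Some x else Some (x+1))"
  by (cases e rule: rev_cases) (auto simp: wl_def nth_append Let_def)

lemma sig_step: "length e = n \<Longrightarrow> n \<ge> 1 \<Longrightarrow> wl (e @ [x]) (Suc n) = Some a \<Longrightarrow>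
   sig (e @ [x]) (Suc n) = Fm n (phi n e, a)"
  by (auto simp: sig_app wl_app phi_def Fm_def Let_def)

lemma sig_stepR: "length e = n \<Longrightarrow> n \<ge> 1 \<Longrightarrow> wl (e @ [x]) (Suc n) = None \<Longrightarrow>
   sig (e @ [x]) (Suc n) = sig e n"
  by (auto simp: sig_app wl_app Let_def)

lemma inv_seq_snoc: "length e = n \<Longrightarrow>
  (e @ [x] \<in> inv_seq_000 (Suc n)) \<longleftrightarrow> (e \<in> inv_seq_000 n \<and> x \<le> n \<and>
     (n \<ge> 2 \<longrightarrow> \<not> (e!(n-2) = e!(n-1) \<and> e!(n-1) = x)))"
proof -
  assume len: "length e = n"
  let ?l = "e @ [x]"
  have nl: "\<And>i. i < n \<Longrightarrow> ?l ! i = e ! i" using len by (simp add: nth_append)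
  have nn: "?l ! n = x" using len by (simp add: nth_append)
  show ?thesis
  proof
    assume "?l \<in> inv_seq_000 (Suc n)"
    then have b: "\<forall>i<Suc n. ?l ! i \<le> i" and c: "\<forall>i. i + 2 < Suc n \<longrightarrow> \<not> (?l ! i = ?l ! (i+1) \<and> ?l ! (i+1) = ?l ! (i+2))"
      by (auto simp: inv_seq_000_def)
    have "\<forall>i<n. e ! i \<le> i" using b nl by (metis less_SucI)
    moreover have "\<forall>i. i + 2 < n \<longrightarrow> \<not> (e ! i = e ! (i+1) \<and> e ! (i+1) = e ! (i+2))"
    proof (intro allI impI)
      fix i assume i: "i + 2 < n"
      then show "\<not> (e ! i = e ! (i+1) \<and> e ! (i+1) = e ! (i+2))" using c[rule_format, of i] nl[of i] nl[of "i+1"] nl[of "i+2"] by auto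
    qed
    moreover have "x \<le> n" using b nn by auto
    moreover have "n \<ge> 2 \<longrightarrow> \<not> (e!(n-2) = e!(n-1) \<and> e!(n-1) = x)"
    proof
      assume n2: "n \<ge> 2"
      have "\<not> (?l ! (n-2) = ?l ! (n-2+1) \<and> ?l ! (n-2+1) = ?l ! (n-2+2))" using c[rule_format, of "n-2"] n2 by auto
      moreover have "n-2+1 = n-1" "n-2+2 = n" using n2 by auto
      ultimately show "\<not> (e!(n-2) = e!(n-1) \<and> e!(n-1) = x)" using nl[of "n-2"] nl[of "n-1"] nn n2 by auto
    qed
    ultimately show "e \<in> inv_seq_000 n \<and> x \<le> n \<and> (n \<ge> 2 \<longrightarrow> \<not> (e!(n-2) = e!(n-1) \<and> e!(n-1) = x))"
      using len by (auto simp: inv_seq_000_def)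
  next
    assume a: "e \<in> inv_seq_000 n \<and> x \<le> n \<and> (n \<ge> 2 \<longrightarrow> \<not> (e!(n-2) = e!(n-1) \<and> e!(n-1) = x))"
    then have b: "\<forall>i<n. e ! i \<le> i" and c: "\<forall>i. i + 2 < n \<longrightarrow> \<not> (e ! i = e ! (i+1) \<and> e ! (i+1) = e ! (i+2))"
      and x: "x \<le> n" and d: "n \<ge> 2 \<longrightarrow> \<not> (e!(n-2) = e!(n-1) \<and> e!(n-1) = x)"
      by (auto simp: inv_seq_000_def)
    have "\<forall>i<Suc n. ?l ! i \<le> i"
    proof (intro allI impI)
      fix i assume "i < Suc n"
      then show "?l ! i \<le> i"
      proof (cases "i < n")
        case False
        then have "i = n" using \<open>i < Suc n\<close> by simp
        then show ?thesis using nn x by simp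
      qed (use b nl in auto)
    qed
    moreover have "\<forall>i. i + 2 < Suc n \<longrightarrow> \<not> (?l ! i = ?l ! (i+1) \<and> ?l ! (i+1) = ?l ! (i+2))"
    proof (intro allI impI)
      fix i assume i: "i + 2 < Suc n"
      show "\<not> (?l ! i = ?l ! (i+1) \<and> ?l ! (i+1) = ?l ! (i+2))"
      proof (cases "i + 2 < n")
        case True
        then show ?thesis using c nl[of i] nl[of "i+1"] nl[of "i+2"] by auto
      next
        case False
        then have ie: "i = n - 2" "i + 1 = n - 1" "i + 2 = n" "n \<ge> 2" using i by auto
        then show ?thesis using d nl[of i] nl[of "i+1"] nn by auto
      qed
    qed
    ultimately show "?l \<in> inv_seq_000 (Suc n)" using len by (auto simp: inv_seq_000_def)
  qed
qed

lemma inv_seq_len: "e \<in> inv_seq_000 k \<Longrightarrow> length e = k"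
  by (simp add: inv_seq_000_def)

lemma wl_None: "wl e n = None \<longleftrightarrow> n \<ge> 2 \<and> e!(n-1) = e!(n-2)"
  by (auto simp: wl_def Let_def)

lemma snoc_decomp: "e \<in> inv_seq_000 (Suc n) \<Longrightarrow> e = butlast e @ [last e] \<and> length (butlast e) = n"
proof -
  assume "e \<in> inv_seq_000 (Suc n)"
  then have l: "length e = Suc n" by (rule inv_seq_len)
  then have "e \<noteq> []" by auto
  then show ?thesis using l by simp
qed

lemma last_le: "e \<in> inv_seq_000 n \<Longrightarrow> n \<ge> 1 \<Longrightarrow> last e = e ! (n-1) \<and> last e \<le> n - 1"
proof -
  assume e: "e \<in> inv_seq_000 n" and n: "n \<ge> 1"
  from e have l: "length e = n" by (rule inv_seq_len)
  then have "e \<noteq> []" using n by auto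
  then have "last e = e ! (n-1)" using l by (simp add: last_conv_nth)
  moreover have "e ! (n-1) \<le> n-1" using e n by (auto simp: inv_seq_000_def)
  ultimately show ?thesis by simp
qed

lemma phi_bij_of_pair:
  assumes n: "n \<ge> 1" and A: "bij_betw (\<lambda>e. sig e n) (Aset n) (Dbar n)"
    and B: "bij_betw (\<lambda>e. sig e n) (Bset n) (Dbar (n-1))"
  shows "bij_betw (phi n) (inv_seq_000 n) (Inl ` Dbar n \<union> Inr ` Dbar (n-1))"
proof -
  have U: "inv_seq_000 n = Aset n \<union> Bset n" by (auto simp: Aset_def Bset_def)
  have A1: "bij_betw (Inl \<circ> (\<lambda>e. sig e n)) (Aset n) (Inl ` Dbar n)"
    by (rule bij_betw_trans[OF A]) (rule inj_on_imp_bij_betw, simp)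
  have A2: "bij_betw (phi n) (Aset n) (Inl ` Dbar n)"
    using A1 by (rule bij_betw_cong[THEN iffD1, rotated]) (auto simp: phi_def Aset_def)
  have B1: "bij_betw (Inr \<circ> (\<lambda>e. sig e n)) (Bset n) (Inr ` Dbar (n-1))"
    by (rule bij_betw_trans[OF B]) (rule inj_on_imp_bij_betw, simp)
  have B2: "bij_betw (phi n) (Bset n) (Inr ` Dbar (n-1))"
    using B1 by (rule bij_betw_cong[THEN iffD1, rotated]) (auto simp: phi_def Bset_def)
  show ?thesis unfolding U by (rule bij_betw_combine[OF A2 B2]) auto
qed


lemma A_step:
  assumes n: "n \<ge> 1" and P: "bij_betw (phi n) (inv_seq_000 n) (Inl ` Dbar n \<union> Inr ` Dbar (n-1))"
  shows "bij_betw (\<lambda>e. sig e (Suc n)) (Aset (Suc n)) (Dbar (Suc n))"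
proof -
  let ?g = "\<lambda>e. (butlast e, the (wl e (Suc n)))"
  let ?h = "\<lambda>(e'::nat list, w::nat). e' @ [if w > last e' then w else w - 1]"
  have g: "bij_betw ?g (Aset (Suc n)) (inv_seq_000 n \<times> {1..n})"
  proof (rule bij_betw_byWitness[where f' = ?h])
    show "\<forall>e\<in>Aset (Suc n). ?h (?g e) = e"
    proof
      fix e assume e: "e \<in> Aset (Suc n)"
      then have ei: "e \<in> inv_seq_000 (Suc n)" and wn: "wl e (Suc n) \<noteq> None" by (auto simp: Aset_def)
      obtain e' x where ex: "e = e' @ [x]" "length e' = n" using snoc_decomp[OF ei] by metis
      have W: "wl e (Suc n) = (if x = last e' then None else if x > last e' then Some x else Some (x+1))"
        using wl_last[OF ex(2) n] ex(1) by simp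
      then have xl: "x \<noteq> last e'" using wn by auto
      show "?h (?g e) = e" using W xl by (auto simp: ex)
    qed
    show "\<forall>p\<in>inv_seq_000 n \<times> {1..n}. ?g (?h p) = p"
    proof
      fix p assume "p \<in> inv_seq_000 n \<times> {1..n}"
      then obtain e' w where p: "p = (e', w)" "e' \<in> inv_seq_000 n" "w \<in> {1..n}" by auto
      have l: "length e' = n" using p(2) by (rule inv_seq_len)
      show "?g (?h p) = p" using wl_last[OF l n] p by auto
    qed
    show "?g ` Aset (Suc n) \<subseteq> inv_seq_000 n \<times> {1..n}"
    proof
      fix q assume "q \<in> ?g ` Aset (Suc n)"
      then obtain e where e: "e \<in> Aset (Suc n)" "q = ?g e" by auto
      then have ei: "e \<in> inv_seq_000 (Suc n)" and wn: "wl e (Suc n) \<noteq> None" by (auto simp: Aset_def)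
      obtain e' x where ex: "e = e' @ [x]" "length e' = n" using snoc_decomp[OF ei] by metis
      have S: "e' \<in> inv_seq_000 n" "x \<le> n" using inv_seq_snoc[OF ex(2)] ei ex(1) by auto
      have ll: "last e' \<le> n - 1" using last_le[OF S(1) n] by simp
      have W: "wl e (Suc n) = (if x = last e' then None else if x > last e' then Some x else Some (x+1))"
        using wl_last[OF ex(2) n] ex(1) by simp
      have "the (wl e (Suc n)) \<in> {1..n}" using W wn S ll by auto
      then show "q \<in> inv_seq_000 n \<times> {1..n}" using e(2) S ex by simp
    qed
    show "?h ` (inv_seq_000 n \<times> {1..n}) \<subseteq> Aset (Suc n)"
    proof
      fix q assume "q \<in> ?h ` (inv_seq_000 n \<times> {1..n})"
      then obtain e' w where p: "q = ?h (e', w)" "e' \<in> inv_seq_000 n" "w \<in> {1..n}" by auto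
      have l: "length e' = n" using p(2) by (rule inv_seq_len)
      have ll: "last e' = e' ! (n-1)" using last_le[OF p(2) n] by simp
      define x where "x = (if w > last e' then w else w - 1)"
      have q: "q = e' @ [x]" using p(1) x_def by simp
      have xl: "x \<noteq> last e'" using p(3) x_def by auto
      have "x \<le> n" using p(3) x_def by auto
      then have "q \<in> inv_seq_000 (Suc n)" using inv_seq_snoc[OF l] q p(2) xl ll by auto
      moreover have "wl q (Suc n) \<noteq> None" using wl_last[OF l n] q xl by simp
      ultimately show "q \<in> Aset (Suc n)" by (simp add: Aset_def)
    qed
  qed
  have m: "bij_betw (map_prod (phi n) id) (inv_seq_000 n \<times> {1..n}) ((Inl ` Dbar n \<union> Inr ` Dbar (n-1)) \<times> {1..n})"
    by (rule bij_betw_map_prod[OF P bij_betw_id])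
  have c: "bij_betw (Fm n \<circ> (map_prod (phi n) id \<circ> ?g)) (Aset (Suc n)) (Dbar (Suc n))"
    by (rule bij_betw_trans[OF bij_betw_trans[OF g m] Fm_bij[OF n]])
  have eq: "(Fm n \<circ> (map_prod (phi n) id \<circ> ?g)) e = sig e (Suc n)" if e: "e \<in> Aset (Suc n)" for e
  proof -
    from e have ei: "e \<in> inv_seq_000 (Suc n)" and wn: "wl e (Suc n) \<noteq> None" by (auto simp: Aset_def)
    obtain e' x where ex: "e = e' @ [x]" "length e' = n" using snoc_decomp[OF ei] by metis
    obtain a where a: "wl e (Suc n) = Some a" using wn by auto
    have "sig e (Suc n) = Fm n (phi n e', a)" using sig_step[OF ex(2) n] a ex(1) by simp
    then show "(Fm n \<circ> (map_prod (phi n) id \<circ> ?g)) e = sig e (Suc n)" using a ex by simp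
  qed
  show ?thesis using c by (rule bij_betw_cong[THEN iffD1, rotated]) (erule eq)
qed


lemma B_step:
  assumes n: "n \<ge> 1" and A: "bij_betw (\<lambda>e. sig e n) (Aset n) (Dbar n)"
  shows "bij_betw (\<lambda>e. sig e (Suc n)) (Bset (Suc n)) (Dbar n)"
proof -
  have g: "bij_betw butlast (Bset (Suc n)) (Aset n)"
  proof (rule bij_betw_byWitness[where f' = "\<lambda>e. e @ [last e]"])
    show "\<forall>e\<in>Bset (Suc n). butlast e @ [last (butlast e)] = e"
    proof
      fix e assume e: "e \<in> Bset (Suc n)"
      then have ei: "e \<in> inv_seq_000 (Suc n)" and wn: "wl e (Suc n) = None" by (auto simp: Bset_def)
      obtain e' x where ex: "e = e' @ [x]" "length e' = n" using snoc_decomp[OF ei] by metis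
      have "x = last e'" using wl_last[OF ex(2) n] wn ex(1) by (auto split: if_splits)
      then show "butlast e @ [last (butlast e)] = e" using ex by simp
    qed
    show "\<forall>e\<in>Aset n. butlast (e @ [last e]) = e" by simp
    show "butlast ` Bset (Suc n) \<subseteq> Aset n"
    proof
      fix q assume "q \<in> butlast ` Bset (Suc n)"
      then obtain e where e: "e \<in> Bset (Suc n)" "q = butlast e" by auto
      then have ei: "e \<in> inv_seq_000 (Suc n)" and wn: "wl e (Suc n) = None" by (auto simp: Bset_def)
      obtain e' x where ex: "e = e' @ [x]" "length e' = n" using snoc_decomp[OF ei] by metis
      have S: "e' \<in> inv_seq_000 n" and d: "n \<ge> 2 \<longrightarrow> \<not> (e'!(n-2) = e'!(n-1) \<and> e'!(n-1) = x)"
        using inv_seq_snoc[OF ex(2)] ei ex(1) by auto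
      have xl: "x = last e'" using wl_last[OF ex(2) n] wn ex(1) by (auto split: if_splits)
      have ll: "last e' = e' ! (n-1)" using last_le[OF S n] by simp
      have "\<not> (n \<ge> 2 \<and> e'!(n-1) = e'!(n-2))" using d xl ll by auto
      then have "wl e' n \<noteq> None" by (simp add: wl_None)
      then show "q \<in> Aset n" using S e(2) ex by (simp add: Aset_def)
    qed
    show "(\<lambda>e. e @ [last e]) ` Aset n \<subseteq> Bset (Suc n)"
    proof
      fix q assume "q \<in> (\<lambda>e. e @ [last e]) ` Aset n"
      then obtain e where e: "e \<in> Aset n" "q = e @ [last e]" by auto
      then have S: "e \<in> inv_seq_000 n" and wn: "wl e n \<noteq> None" by (auto simp: Aset_def)
      have l: "length e = n" using S by (rule inv_seq_len)
      have ll: "last e = e ! (n-1)" "last e \<le> n - 1" using last_le[OF S n] by auto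
      have c1: "last e \<le> n" using ll by linarith
      have w2: "\<not> (n \<ge> 2 \<and> e!(n-1) = e!(n-2))" using wn by (simp add: wl_None)
      have c2: "n \<ge> 2 \<longrightarrow> \<not> (e!(n-2) = e!(n-1) \<and> e!(n-1) = last e)" using w2 by auto
      have "q \<in> inv_seq_000 (Suc n)" unfolding e(2) using inv_seq_snoc[OF l, of "last e"] S c1 c2 by blast
      moreover have "wl q (Suc n) = None" using wl_last[OF l n] e(2) by simp
      ultimately show "q \<in> Bset (Suc n)" by (simp add: Bset_def)
    qed
  qed
  have c: "bij_betw ((\<lambda>e. sig e n) \<circ> butlast) (Bset (Suc n)) (Dbar n)"
    by (rule bij_betw_trans[OF g A])
  have eq: "((\<lambda>e. sig e n) \<circ> butlast) e = sig e (Suc n)" if e: "e \<in> Bset (Suc n)" for e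
  proof -
    from e have ei: "e \<in> inv_seq_000 (Suc n)" and wn: "wl e (Suc n) = None" by (auto simp: Bset_def)
    obtain e' x where ex: "e = e' @ [x]" "length e' = n" using snoc_decomp[OF ei] by metis
    have "sig e (Suc n) = sig e' n" using sig_stepR[OF ex(2) n] wn ex(1) by simp
    then show "((\<lambda>e. sig e n) \<circ> butlast) e = sig e (Suc n)" using ex by simp
  qed
  show ?thesis using c by (rule bij_betw_cong[THEN iffD1, rotated]) (erule eq)
qed


lemma pair_base: "bij_betw (\<lambda>e. sig e (Suc 0)) (Aset (Suc 0)) (Dbar (Suc 0)) \<and> bij_betw (\<lambda>e. sig e (Suc 0)) (Bset (Suc 0)) (Dbar 0)"
proof -
  have I: "inv_seq_000 (Suc 0) = {[0]}" by (auto simp: inv_seq_000_def length_Suc_conv)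
  have A: "Aset (Suc 0) = {[0]}" using I by (auto simp: Aset_def wl_def)
  have B: "Bset (Suc 0) = {}" using I by (auto simp: Bset_def wl_def)
  have D1: "Dbar (Suc 0) = {id}" by (auto simp: Dbar_def)
  have D0: "Dbar 0 = {}" by (auto simp: Dbar_def)
  have s1: "sig [0] (Suc 0) = id" by simp
  show ?thesis unfolding A B D1 D0 using s1 by (simp add: bij_betw_def)
qed

lemma pair: "n \<ge> 1 \<Longrightarrow> bij_betw (\<lambda>e. sig e n) (Aset n) (Dbar n) \<and> bij_betw (\<lambda>e. sig e n) (Bset n) (Dbar (n-1))"
proof (induction n rule: nat_induct_at_least)
  case base
  then show ?case using pair_base by (simp add: id_def)
next
  case (Suc n)
  have P: "bij_betw (phi n) (inv_seq_000 n) (Inl ` Dbar n \<union> Inr ` Dbar (n-1))"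
    using phi_bij_of_pair[OF Suc(1)] Suc(2) by blast
  show ?case using A_step[OF Suc(1) P] B_step[OF Suc(1)] Suc(2) by simp
qed

lemma card_Dbar: "card (Dbar m) = fact m - dn m"
proof -
  have fin: "finite {p. p permutes {1..m}}" by (rule finite_permutations) simp
  have E: "Dbar m = {p. p permutes {1..m}} - derangements m" by (auto simp: Dbar_def derangements_def)
  have sub: "derangements m \<subseteq> {p. p permutes {1..m}}" by (auto simp: derangements_def)
  have "card (Dbar m) = card {p. p permutes {1..m}} - card (derangements m)"
    unfolding E by (rule card_Diff_subset[OF finite_subset[OF sub fin] sub])
  also have "card {p. p permutes {1..m}} = fact m" by (rule card_permutations) simp_all
  finally show ?thesis by (simp add: dn_def)
qed

lemma finite_Dbar: "finite (Dbar m)"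
  by (rule finite_subset[OF _ finite_permutations[of "{1..m}"]]) (auto simp: Dbar_def)

theorem mainTheorem1:
  fixes n :: nat
  assumes "n \<ge> 1"
  shows "bij_betw (phi n) (inv_seq_000 n) (Inl ` Dbar n \<union> Inr ` Dbar (n - 1))
         \<and> card (inv_seq_000 n) = (fact n - dn n) + (fact (n - 1) - dn (n - 1))"
proof -
  have b: "bij_betw (phi n) (inv_seq_000 n) (Inl ` Dbar n \<union> Inr ` Dbar (n - 1))"
    using phi_bij_of_pair[OF assms] pair[OF assms] by blast
  have "card (inv_seq_000 n) = card (Inl ` Dbar n \<union> Inr ` Dbar (n - 1))"
    by (rule bij_betw_same_card[OF b])
  also have "\<dots> = card (Inl ` Dbar n :: ((nat \<Rightarrow> nat) + (nat \<Rightarrow> nat)) set) + card (Inr ` Dbar (n - 1) :: ((nat \<Rightarrow> nat) + (nat \<Rightarrow> nat)) set)"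
  proof (rule card_Un_disjoint)
    show "finite (Inl ` Dbar n)" using finite_Dbar by blast
    show "finite (Inr ` Dbar (n-1))" using finite_Dbar by blast
    show "Inl ` Dbar n \<inter> Inr ` Dbar (n - 1) = {}" by blast
  qed
  also have "\<dots> = card (Dbar n) + card (Dbar (n-1))"
    by (simp add: card_image)
  finally show ?thesis using b by (simp add: card_Dbar)
qed

end
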